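(* Let $k$ be an algebraically closed field of characteristic zero. Let $s,m,d$ be nonnegative integers with $d\ge m-1$. Let $X\subset\mathbb{P}^2_k$ be a generic union of an $m$-multiple point $mP$ and $s$ $2$-dots $Z_1,\dots,Z_s$. Then $X$ has good postulation in degree $d$, i.e. $$h^0(\mathcal{I}_X(d))=\max\left\{\binom{d+2}{2}-\binom{m+1}{2}-2s,\,0\right\}.$$
   Context: For a point $P\in\mathbb{P}^2$ and an integer $m\ge 1$, the $m$-multiple point $mP$ is the zero-dimensional subscheme defined by the ideal sheaf $\mathcal{I}_P^m$ (for $m=0$ it is empty); it has length $\binom{m+1}{2}$. A double point is $2P$. A $2$-dot is a subscheme of length $2$ of a double point (i.e. a point together with a tangent direction). "Generic union" means the point $P$ and the $2$-dots are chosen generically (in a nonempty open subset of the corresponding parameter space). $\mathcal{I}_X$ is the ideal sheaf of $X$ and $h^0(\mathcal{F})=\dim_k H^0(\mathbb{P}^2,\mathcal{F})$. *)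

theory Defs
  imports Main "HOL-Computational_Algebra.Polynomial" "HOL-Library.Poly_Mapping" "HOL-Library.Function_Algebras"
begin

definition alg_closed :: "'k::field itself \<Rightarrow> bool" where
  "alg_closed _ \<longleftrightarrow> (\<forall>p::'k poly. degree p \<ge> 1 \<longrightarrow> (\<exists>x. poly p x = 0))"

text \<open>Homogeneous ternary forms of degree d over k, represented by their coefficient
  functions on exponent triples (a,b,c) (monomial x^a y^b z^c), supported on a+b+c = d.
  This is H^0(O_P2(d)), a k-vector space under pointwise scaling.\<close>
definition forms :: "nat \<Rightarrow> (nat \<times> nat \<times> nat \<Rightarrow> 'k::field) set" where
  "forms d = {F. \<forall>a b c. F (a,b,c) \<noteq> 0 \<longrightarrow> a + b + c = d}"

definition monoms :: "nat \<Rightarrow> (nat \<times> nat \<times> nat) set" where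
  "monoms d = {(a,b,c). a + b + c = d}"

text \<open>Falling factorial a (a-1) ... (a-i+1) in k (zero if i > a).\<close>
definition ffact :: "nat \<Rightarrow> nat \<Rightarrow> 'k::field" where
  "ffact a i = (\<Prod>t<i. of_nat (a - t))"

definition pderiv_at ::
  "nat \<Rightarrow> (nat \<times> nat \<times> nat \<Rightarrow> 'k::field) \<Rightarrow> nat \<times> nat \<times> nat \<Rightarrow> 'k \<times> 'k \<times> 'k \<Rightarrow> 'k" where
  "pderiv_at d F ijl p =
     (case ijl of (i,j,l) \<Rightarrow> case p of (p0,p1,p2) \<Rightarrow>
       (\<Sum>(a,b,c)\<in>monoms d. F (a,b,c) * ffact a i * ffact b j * ffact c l
            * p0 ^ (a - i) * p1 ^ (b - j) * p2 ^ (c - l)))"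

definition eval_form :: "nat \<Rightarrow> (nat \<times> nat \<times> nat \<Rightarrow> 'k::field) \<Rightarrow> 'k \<times> 'k \<times> 'k \<Rightarrow> 'k" where
  "eval_form d F p = pderiv_at d F (0,0,0) p"

text \<open>F lies in (I_P^m)(d), P = [p]: in characteristic zero this means that all partial
  derivatives of F of order < m vanish at p (the local Taylor expansion at P lies in the
  m-th power of the maximal ideal).\<close>
definition in_mult_point :: "nat \<Rightarrow> nat \<Rightarrow> 'k::field \<times> 'k \<times> 'k \<Rightarrow> (nat \<times> nat \<times> nat \<Rightarrow> 'k) \<Rightarrow> bool" where
  "in_mult_point d m p F \<longleftrightarrow> (\<forall>i j l. i + j + l < m \<longrightarrow> pderiv_at d F (i,j,l) p = 0)"

text \<open>F lies in the ideal of the 2-dot supported at Q = [q] with tangent direction given by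
  the vector w (not proportional to q): F(q) = 0 and the derivative of F in direction w at q
  vanishes.\<close>
definition in_2dot :: "nat \<Rightarrow> 'k::field \<times> 'k \<times> 'k \<Rightarrow> 'k \<times> 'k \<times> 'k \<Rightarrow> (nat \<times> nat \<times> nat \<Rightarrow> 'k) \<Rightarrow> bool" where
  "in_2dot d q w F \<longleftrightarrow> eval_form d F q = 0 \<and>
     (case w of (w0,w1,w2) \<Rightarrow>
        w0 * pderiv_at d F (1,0,0) q + w1 * pderiv_at d F (0,1,0) q + w2 * pderiv_at d F (0,0,1) q = 0)"

definition indep2 :: "'k::field \<times> 'k \<times> 'k \<Rightarrow> 'k \<times> 'k \<times> 'k \<Rightarrow> bool" where
  "indep2 q w \<longleftrightarrow> (case q of (q0,q1,q2) \<Rightarrow> case w of (w0,w1,w2) \<Rightarrow>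
      q1*w2 - q2*w1 \<noteq> 0 \<or> q2*w0 - q0*w2 \<noteq> 0 \<or> q0*w1 - q1*w0 \<noteq> 0)"

text \<open>H^0(I_X(d)) for X = mP \<union> Z_1 \<union> ... \<union> Z_s, Z_i the 2-dot at q i with direction w i.\<close>
definition H0_IX :: "nat \<Rightarrow> nat \<Rightarrow> 'k::field \<times> 'k \<times> 'k \<Rightarrow> nat \<Rightarrow> (nat \<Rightarrow> 'k \<times> 'k \<times> 'k)
    \<Rightarrow> (nat \<Rightarrow> 'k \<times> 'k \<times> 'k) \<Rightarrow> (nat \<times> nat \<times> nat \<Rightarrow> 'k) set" where
  "H0_IX d m p s q w = {F \<in> forms d. in_mult_point d m p F \<and> (\<forall>i<s. in_2dot d (q i) (w i) F)}"

definition h0_IX :: "nat \<Rightarrow> nat \<Rightarrow> 'k::field \<times> 'k \<times> 'k \<Rightarrow> nat \<Rightarrow> (nat \<Rightarrow> 'k \<times> 'k \<times> 'k)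
    \<Rightarrow> (nat \<Rightarrow> 'k \<times> 'k \<times> 'k) \<Rightarrow> nat" where
  "h0_IX d m p s q w = vector_space.dim (\<lambda>c F x. c * F x) (H0_IX d m p s q w)"

definition mpoly_eval :: "((nat \<Rightarrow>\<^sub>0 nat) \<Rightarrow>\<^sub>0 'k::field) \<Rightarrow> (nat \<Rightarrow> 'k) \<Rightarrow> 'k" where
  "mpoly_eval G x = (\<Sum>mon\<in>Poly_Mapping.keys G. Poly_Mapping.lookup G mon * (\<Prod>i\<in>Poly_Mapping.keys mon. x i ^ Poly_Mapping.lookup mon i))"

definition mpoly_in_vars :: "((nat \<Rightarrow>\<^sub>0 nat) \<Rightarrow>\<^sub>0 'k::field) \<Rightarrow> nat set \<Rightarrow> bool" where
  "mpoly_in_vars G V \<longleftrightarrow> (\<forall>mon\<in>Poly_Mapping.keys G. Poly_Mapping.keys mon \<subseteq> V)"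

text \<open>Parameter vector x : nat => k encodes p = (x0,x1,x2), and for i < s the point
  q i and tangent vector w i in the coordinates 3+6i, ..., 3+6i+5.\<close>
definition par_p :: "(nat \<Rightarrow> 'k) \<Rightarrow> 'k \<times> 'k \<times> 'k" where
  "par_p x = (x 0, x 1, x 2)"
definition par_q :: "(nat \<Rightarrow> 'k) \<Rightarrow> nat \<Rightarrow> 'k \<times> 'k \<times> 'k" where
  "par_q x i = (x (3+6*i), x (3+6*i+1), x (3+6*i+2))"
definition par_w :: "(nat \<Rightarrow> 'k) \<Rightarrow> nat \<Rightarrow> 'k \<times> 'k \<times> 'k" where
  "par_w x i = (x (3+6*i+3), x (3+6*i+4), x (3+6*i+5))"

end

theory Submission
  imports Defs "Jordan_Normal_Form.Determinant"
begin


definition mono_eval :: "(nat \<Rightarrow>\<^sub>0 nat) \<Rightarrow> (nat \<Rightarrow> 'k::field) \<Rightarrow> 'k" where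
  "mono_eval mn x = (\<Prod>i\<in>Poly_Mapping.keys mn. x i ^ Poly_Mapping.lookup mn i)"

lemma mono_eval_superset:
  assumes "finite S" "Poly_Mapping.keys mn \<subseteq> S"
  shows "mono_eval mn x = (\<Prod>i\<in>S. x i ^ Poly_Mapping.lookup mn i)"
  unfolding mono_eval_def
  by (rule prod.mono_neutral_left) (use assms in \<open>auto simp: in_keys_iff\<close>)

lemma mono_eval_add: "mono_eval (a + b) x = mono_eval a x * mono_eval b x"
proof -
  let ?S = "Poly_Mapping.keys a \<union> Poly_Mapping.keys b"
  have f: "finite ?S" by auto
  have "mono_eval (a + b) x = (\<Prod>i\<in>?S. x i ^ Poly_Mapping.lookup (a+b) i)"
    by (rule mono_eval_superset[OF f keys_add])
  also have "\<dots> = (\<Prod>i\<in>?S. x i ^ Poly_Mapping.lookup a i) * (\<Prod>i\<in>?S. x i ^ Poly_Mapping.lookup b i)"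
    by (simp add: lookup_add power_add prod.distrib)
  also have "\<dots> = mono_eval a x * mono_eval b x"
    using mono_eval_superset[OF f, of a x] mono_eval_superset[OF f, of b x] by auto
  finally show ?thesis .
qed

lemma mono_eval_zero[simp]: "mono_eval 0 x = 1"
  by (simp add: mono_eval_def)

lemma mpoly_eval_alt: "mpoly_eval G x = (\<Sum>mn\<in>Poly_Mapping.keys G. Poly_Mapping.lookup G mn * mono_eval mn x)"
  by (simp add: mpoly_eval_def mono_eval_def)

lemma mpoly_eval_add: "mpoly_eval (f + g) x = mpoly_eval f x + mpoly_eval g x"
  unfolding mpoly_eval_alt
  by (rule setsum_keys_plus_distrib) (auto simp: distrib_right)

lemma mpoly_eval_0[simp]: "mpoly_eval 0 x = 0"
  by (simp add: mpoly_eval_def)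

lemma mpoly_eval_single[simp]: "mpoly_eval (Poly_Mapping.single k a) x = a * mono_eval k x"
  by (simp add: mpoly_eval_alt)

lemma mpoly_eval_sum: "mpoly_eval (\<Sum>i\<in>A. f i) x = (\<Sum>i\<in>A. mpoly_eval (f i) x)"
  by (induction A rule: infinite_finite_induct) (auto simp: mpoly_eval_add)

lemma mpoly_as_sum: "G = (\<Sum>mn\<in>Poly_Mapping.keys G. Poly_Mapping.single mn (Poly_Mapping.lookup G mn))"
proof (rule poly_mapping_eqI)
  fix k
  show "Poly_Mapping.lookup G k = Poly_Mapping.lookup (\<Sum>mn\<in>Poly_Mapping.keys G. Poly_Mapping.single mn (Poly_Mapping.lookup G mn)) k"
  proof (cases "k \<in> Poly_Mapping.keys G")
    case True
    then show ?thesis unfolding lookup_sum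
      by (subst sum.remove[OF _ True]) (auto simp: lookup_single_not_eq intro!: sum.neutral)
  next
    case False
    then show ?thesis unfolding lookup_sum
      by (auto simp: lookup_single in_keys_iff when_def intro!: sum.neutral)
  qed
qed

lemma mpoly_eval_mult: "mpoly_eval (f * g) x = mpoly_eval f x * mpoly_eval g x"
proof -
  have "f * g = (\<Sum>a\<in>Poly_Mapping.keys f. Poly_Mapping.single a (Poly_Mapping.lookup f a)) *
     (\<Sum>b\<in>Poly_Mapping.keys g. Poly_Mapping.single b (Poly_Mapping.lookup g b))"
    using mpoly_as_sum[of f] mpoly_as_sum[of g] by simp
  also have "\<dots> = (\<Sum>a\<in>Poly_Mapping.keys f. \<Sum>b\<in>Poly_Mapping.keys g.
      Poly_Mapping.single (a+b) (Poly_Mapping.lookup f a * Poly_Mapping.lookup g b))"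
    by (simp add: sum_distrib_left sum_distrib_right mult_single) (rule sum.swap)
  finally have "mpoly_eval (f * g) x = (\<Sum>a\<in>Poly_Mapping.keys f. \<Sum>b\<in>Poly_Mapping.keys g.
      Poly_Mapping.lookup f a * Poly_Mapping.lookup g b * mono_eval (a+b) x)"
    by (simp add: mpoly_eval_sum)
  also have "\<dots> = mpoly_eval f x * mpoly_eval g x"
    by (simp add: mpoly_eval_alt mono_eval_add sum_distrib_left sum_distrib_right mult_ac) (subst sum.swap, simp add: mult_ac)
  finally show ?thesis .
qed

lemma mpoly_eval_1[simp]: "mpoly_eval 1 x = 1"
  by (simp add: mpoly_eval_def)





datatype row = RP nat nat | RQ nat | RW nat | RZ

definition pd_coef :: "nat \<times> nat \<times> nat \<Rightarrow> 'k::field \<times> 'k \<times> 'k \<Rightarrow> nat \<times> nat \<times> nat \<Rightarrow> 'k" where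
  "pd_coef ijl p mn = (case ijl of (i,j,l) \<Rightarrow> case p of (p0,p1,p2) \<Rightarrow> case mn of (a,b,c) \<Rightarrow>
     ffact a i * ffact b j * ffact c l * p0 ^ (a - i) * p1 ^ (b - j) * p2 ^ (c - l))"

lemma pderiv_at_alt: "pderiv_at d F ijl p = (\<Sum>mn\<in>monoms d. F mn * pd_coef ijl p mn)"
  unfolding pderiv_at_def pd_coef_def
  by (cases ijl; cases p) (auto intro!: sum.cong simp: mult_ac)

fun kappa :: "row \<Rightarrow> (nat \<Rightarrow> 'k::field) \<Rightarrow> nat \<times> nat \<times> nat \<Rightarrow> 'k" where
  "kappa (RP i j) x mn = pd_coef (i,j,0) (par_p x) mn"
| "kappa (RQ i) x mn = pd_coef (0,0,0) (par_q x i) mn"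
| "kappa (RW i) x mn = (case par_w x i of (w0,w1,w2) \<Rightarrow>
     w0 * pd_coef (1,0,0) (par_q x i) mn + w1 * pd_coef (0,1,0) (par_q x i) mn + w2 * pd_coef (0,0,1) (par_q x i) mn)"
| "kappa RZ x mn = 0"

definition ell :: "nat \<Rightarrow> row \<Rightarrow> (nat \<Rightarrow> 'k::field) \<Rightarrow> (nat \<times> nat \<times> nat \<Rightarrow> 'k) \<Rightarrow> 'k" where
  "ell d r x F = (\<Sum>mn\<in>monoms d. F mn * kappa r x mn)"

lemma finite_monoms[simp]: "finite (monoms d)"
proof -
  have "monoms d \<subseteq> {..d} \<times> {..d} \<times> {..d}" by (auto simp: monoms_def)
  then show ?thesis by (rule finite_subset) auto
qed

lemma ell_RP: "ell d (RP i j) x F = pderiv_at d F (i,j,0) (par_p x)"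
  by (simp add: ell_def pderiv_at_alt)

lemma ell_RQ: "ell d (RQ i) x F = eval_form d F (par_q x i)"
  by (simp add: ell_def pderiv_at_alt eval_form_def)

lemma ell_RW: "ell d (RW i) x F = (case par_w x i of (w0,w1,w2) \<Rightarrow>
   w0 * pderiv_at d F (1,0,0) (par_q x i) + w1 * pderiv_at d F (0,1,0) (par_q x i) + w2 * pderiv_at d F (0,0,1) (par_q x i))"
  by (cases "par_w x i") (simp add: ell_def pderiv_at_alt sum_distrib_left sum.distrib algebra_simps)

lemma in_2dot_ell: "in_2dot d (par_q x i) (par_w x i) F \<longleftrightarrow> ell d (RQ i) x F = 0 \<and> ell d (RW i) x F = 0"
  unfolding in_2dot_def ell_RQ ell_RW by (cases "par_w x i") auto

lemma ell_scale: "ell d r x (\<lambda>mn. c * F mn) = c * ell d r x F"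
  by (simp add: ell_def sum_distrib_left mult_ac)

lemma ell_add: "ell d r x (\<lambda>mn. F mn + G mn) = ell d r x F + ell d r x G"
  by (simp add: ell_def sum.distrib algebra_simps)

lemma ell_diff: "ell d r x (\<lambda>mn. F mn - G mn) = ell d r x F - ell d r x G"
  by (simp add: ell_def sum_subtractf algebra_simps)

lemma ell_sum: "finite A \<Longrightarrow> ell d r x (\<lambda>mn. \<Sum>t\<in>A. F t mn) = (\<Sum>t\<in>A. ell d r x (F t))"
  unfolding ell_def sum_distrib_right by (rule sum.swap)

lemma ell_zero: "ell d r x (\<lambda>mn. 0) = 0"
  by (simp add: ell_def)

definition vf :: "(nat \<times> nat \<times> nat) list \<Rightarrow> 'k::field vec \<Rightarrow> nat \<times> nat \<times> nat \<Rightarrow> 'k" where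
  "vf Cs v = (\<lambda>mn. \<Sum>k<length Cs. v $ k * (if Cs!k = mn then 1 else 0))"

lemma vf_nth: "distinct Cs \<Longrightarrow> k < length Cs \<Longrightarrow> vf Cs v (Cs!k) = v $ k"
  unfolding vf_def
  by (subst sum.remove[of _ k]) (auto simp: nth_eq_iff_index_eq intro!: sum.neutral)

lemma vf_out: "mn \<notin> set Cs \<Longrightarrow> vf Cs v mn = 0"
  unfolding vf_def by (auto intro!: sum.neutral)

lemma ell_vf: "set Cs \<subseteq> monoms d \<Longrightarrow> ell d r x (vf Cs v) = (\<Sum>k<length Cs. v $ k * kappa r x (Cs!k))"
proof -
  assume sub: "set Cs \<subseteq> monoms d"
  have "ell d r x (vf Cs v) = (\<Sum>k<length Cs. \<Sum>mn\<in>monoms d. v $ k * (if Cs!k = mn then 1 else 0) * kappa r x mn)"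
    unfolding ell_def vf_def sum_distrib_right by (rule sum.swap)
  also have "\<dots> = (\<Sum>k<length Cs. v $ k * kappa r x (Cs!k))"
  proof (rule sum.cong[OF refl])
    fix k assume "k \<in> {..<length Cs}"
    then have "Cs!k \<in> monoms d" using sub by auto
    have "(\<lambda>mn. v $ k * (if Cs!k = mn then 1 else 0) * kappa r x mn) = (\<lambda>mn. if Cs!k = mn then v $ k * kappa r x (Cs!k) else 0)"
      by (auto simp: fun_eq_iff)
    then show "(\<Sum>mn\<in>monoms d. v $ k * (if Cs!k = mn then 1 else 0) * kappa r x mn) = v $ k * kappa r x (Cs!k)"
      using \<open>Cs!k \<in> monoms d\<close> by (simp only: sum.delta) simp
  qed
  finally show ?thesis .
qed

definition Mx :: "row list \<Rightarrow> (nat \<times> nat \<times> nat) list \<Rightarrow> (nat \<Rightarrow> 'k::field) \<Rightarrow> 'k mat" where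
  "Mx Rs Cs x = mat (length Rs) (length Cs) (\<lambda>(a,k). kappa (Rs!a) x (Cs!k))"

lemma Mx_carrier: "length Cs = length Rs \<Longrightarrow> Mx Rs Cs x \<in> carrier_mat (length Rs) (length Rs)"
  by (simp add: Mx_def)

lemma Mx_mult: "set Cs \<subseteq> monoms d \<Longrightarrow> v \<in> carrier_vec (length Cs) \<Longrightarrow> a < length Rs \<Longrightarrow>
  (Mx Rs Cs x *\<^sub>v v) $ a = ell d (Rs!a) x (vf Cs v)"
  by (simp add: Mx_def ell_vf scalar_prod_def mult_ac atLeast0LessThan) 

lemma vf_of_fun:
  assumes "distinct Cs" "\<And>mn. mn \<notin> set Cs \<Longrightarrow> F mn = 0"
  shows "vf Cs (vec (length Cs) (\<lambda>k. F (Cs!k))) = F"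
proof
  fix mn
  show "vf Cs (vec (length Cs) (\<lambda>k. F (Cs!k))) mn = F mn"
  proof (cases "mn \<in> set Cs")
    case True
    then obtain k where k: "k < length Cs" "mn = Cs!k" by (auto simp: in_set_conv_nth)
    then show ?thesis using vf_nth[OF assms(1) k(1), of "vec (length Cs) (\<lambda>k. F (Cs!k))"] by simp
  next
    case False then show ?thesis using vf_out assms(2) by metis
  qed
qed

lemma LA2:
  fixes x :: "nat \<Rightarrow> 'k::field"
  assumes len: "length Cs = length Rs" and dist: "distinct Cs" and sub: "set Cs \<subseteq> monoms d"
    and det: "det (Mx Rs Cs x) \<noteq> 0"
    and supp: "\<And>mn. mn \<notin> set Cs \<Longrightarrow> F mn = 0"
    and rows: "\<And>r. r \<in> set Rs \<Longrightarrow> ell d r x F = 0"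
  shows "F = (\<lambda>mn. 0)"
proof -
  define v where "v = vec (length Cs) (\<lambda>k. F (Cs!k))"
  have vF: "vf Cs v = F" unfolding v_def by (rule vf_of_fun[OF dist supp])
  have vc: "v \<in> carrier_vec (length Rs)" using len by (simp add: v_def)
  have "Mx Rs Cs x *\<^sub>v v = 0\<^sub>v (length Rs)"
  proof (rule eq_vecI)
    fix a assume "a < dim_vec (0\<^sub>v (length Rs) :: 'k vec)"
    then have a: "a < length Rs" by simp
    show "(Mx Rs Cs x *\<^sub>v v) $ a = 0\<^sub>v (length Rs) $ a"
      using Mx_mult[OF sub, where v=v and Rs=Rs and x=x, OF _ a] vc len vF rows[of "Rs!a"] a by simp
  qed (simp add: Mx_def)
  with det det_0_iff_vec_prod_zero_field[OF Mx_carrier[OF len]] vc have "v = 0\<^sub>v (length Rs)" by auto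
  then show ?thesis using vF len unfolding vf_def by (auto simp: fun_eq_iff)
qed

lemma ell_RZ[simp]: "ell d RZ x F = 0" by (simp add: ell_def)

lemma LA1:
  fixes x :: "nat \<Rightarrow> 'k::field"
  assumes len: "length Cs = length Rs" and dist: "distinct Cs" and sub: "set Cs \<subseteq> monoms d"
    and det: "det (Mx Rs Cs x) \<noteq> 0"
    and b: "b \<in> monoms d" "b \<notin> set Cs"
  shows "\<exists>f. f b = 1 \<and> (\<forall>mn. mn \<notin> set Cs \<and> mn \<noteq> b \<longrightarrow> f mn = 0) \<and> (\<forall>r\<in>set Rs. ell d r x f = 0)"
proof -
  let ?Rs = "Rs @ [RZ]" and ?Cs = "Cs @ [b]"
  let ?n = "Suc (length Rs)"
  have len': "length ?Cs = length ?Rs" using len by simp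
  have car: "Mx ?Rs ?Cs x \<in> carrier_mat ?n ?n" using Mx_carrier[OF len'] by simp
  have "det (Mx ?Rs ?Cs x) = 0"
  proof -
    have "\<And>p. p permutes {0..<?n} \<Longrightarrow> (\<Prod>i = 0..<?n. Mx ?Rs ?Cs x $$ (i, p i)) = 0"
    proof -
      fix p assume p: "p permutes {0..<?n}"
      have "p (length Rs) < ?n" using p by (simp add: permutes_in_image)
      then have "Mx ?Rs ?Cs x $$ (length Rs, p (length Rs)) = 0" using len by (simp add: Mx_def nth_append)
      then show "(\<Prod>i = 0..<?n. Mx ?Rs ?Cs x $$ (i, p i)) = 0"
        apply (intro prod_zero) apply simp apply (rule bexI[of _ "length Rs"]) by auto
    qed
    then show ?thesis unfolding det_def'[OF car] by (intro sum.neutral) simp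
  qed
  then obtain v where v: "v \<in> carrier_vec ?n" "v \<noteq> 0\<^sub>v ?n" "Mx ?Rs ?Cs x *\<^sub>v v = 0\<^sub>v ?n"
    using det_0_iff_vec_prod_zero_field[OF car] by auto
  have dist': "distinct ?Cs" using dist b by simp
  have sub': "set ?Cs \<subseteq> monoms d" using sub b by simp
  define g where "g = vf ?Cs v"
  have grows: "ell d r x g = 0" if r: "r \<in> set Rs" for r
  proof -
    obtain a where a: "a < length Rs" "r = Rs!a" using r by (auto simp: in_set_conv_nth)
    have "(Mx ?Rs ?Cs x *\<^sub>v v) $ a = ell d (?Rs!a) x g"
      unfolding g_def by (rule Mx_mult[OF sub']) (use v(1) len a in auto)
    then show ?thesis using v(3) a by (simp add: nth_append)
  qed
  have gb: "g b = v $ length Rs"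
    using vf_nth[OF dist', of "length Rs" v] len by (simp add: g_def nth_append)
  have gout: "g mn = 0" if "mn \<notin> set Cs" "mn \<noteq> b" for mn
    unfolding g_def by (rule vf_out) (use that in auto)
  have nz: "v $ length Rs \<noteq> 0"
  proof
    assume z: "v $ length Rs = 0"
    have "g = (\<lambda>mn. 0)"
      by (rule LA2[OF len dist sub det]) (use gout gb z grows in auto)
    then have "v $ k = 0" if "k < ?n" for k
      using vf_nth[OF dist', of k v] that len \<open>g = (\<lambda>mn. 0)\<close> unfolding g_def by simp
    then have "v = 0\<^sub>v ?n" using v(1) by (intro eq_vecI) auto
    with v(2) show False by simp
  qed
  define f where "f = (\<lambda>mn. inverse (v $ length Rs) * g mn)"
  show ?thesis
    by (rule exI[of _ f]) (use nz gb gout grows in \<open>auto simp: f_def ell_scale\<close>)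
qed



lemma ffact_0[simp]: "ffact a 0 = 1" by (simp add: ffact_def)
lemma ffact_1[simp]: "ffact a 1 = of_nat a" by (simp add: ffact_def)

lemma pd_coef_0: "pd_coef (0,0,0) (p0,p1,p2) (a,b,c) = p0^a * p1^b * p2^c"
  by (simp add: pd_coef_def)

lemma eval_form_alt: "eval_form d F (p0,p1,p2) = (\<Sum>(a,b,c)\<in>monoms d. F (a,b,c) * (p0^a * p1^b * p2^c))"
  unfolding eval_form_def pderiv_at_alt by (intro sum.cong) (auto simp: pd_coef_0)

lemma U_lemma:
  fixes P Q :: "'k::field_char_0 poly"
  assumes Q0: "poly Q 0 \<noteq> 0" and P0: "poly P 0 = 0" and eq: "P * pderiv Q = Q * pderiv P"
  shows "P = 0"
proof (rule ccontr)
  assume "P \<noteq> 0"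
  define X where "X = [:0, 1::'k:]"
  obtain R where R: "P = X ^ order 0 P * R" "\<not> X dvd R"
    using order_decomp[OF \<open>P \<noteq> 0\<close>, of 0] unfolding X_def by auto
  have "order 0 P \<noteq> 0" using P0 \<open>P \<noteq> 0\<close> order_root by blast
  then obtain k where k: "order 0 P = Suc k" by (cases "order 0 P") auto
  have R0: "poly R 0 \<noteq> 0" using R(2) poly_eq_0_iff_dvd[of R 0] unfolding X_def by simp
  have dX: "pderiv X = 1" unfolding X_def by (simp add: pderiv_pCons)
  have R1: "P = X ^ Suc k * R" using R(1) unfolding k .
  have PR: "P = X^k * (X * R)" using R1 by (simp add: mult_ac)
  have dP: "pderiv P = X^k * (Polynomial.smult (of_nat (Suc k)) R + X * pderiv R)"
    by (subst R1, unfold pderiv_mult pderiv_power_Suc dX) (simp add: algebra_simps)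
  have "X^k * (X * R * pderiv Q) = X^k * (Q * (Polynomial.smult (of_nat (Suc k)) R + X * pderiv R))"
    using eq unfolding dP by (subst (asm) PR) (simp add: algebra_simps)
  moreover have "X^k \<noteq> 0" "X \<noteq> 0" unfolding X_def by simp_all
  ultimately have "X * R * pderiv Q = Q * (Polynomial.smult (of_nat (Suc k)) R + X * pderiv R)" by simp
  then have "poly (X * R * pderiv Q) 0 = poly (Q * (Polynomial.smult (of_nat (Suc k)) R + X * pderiv R)) 0" by simp
  then have "poly Q 0 * (of_nat (Suc k) * poly R 0) = 0" unfolding X_def by simp
  with Q0 R0 show False by (simp del: of_nat_Suc)
qed



lemma coeff_sum_monom: "finite A \<Longrightarrow> coeff (\<Sum>i\<in>A. monom (c i) i) n = (if n \<in> A then c n else 0)"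
  by (simp add: coeff_sum coeff_monom sum.delta)

lemma monoms_reindex:
  fixes g :: "nat \<times> nat \<times> nat \<Rightarrow> 'a::comm_monoid_add"
  assumes zero: "\<And>a b. a \<le> d \<Longrightarrow> b \<le> d \<Longrightarrow> a + b > d \<Longrightarrow> g (a, b, d - a - b) = 0"
  shows "(\<Sum>mn\<in>monoms d. g mn) = (\<Sum>a\<le>d. \<Sum>b\<le>d. g (a, b, d - a - b))"
proof -
  let ?h = "\<lambda>(a::nat, b::nat). (a, b, d - a - b)"
  let ?S = "{(a,b). a + b \<le> d}"
  have inj: "inj_on ?h ?S" by (auto simp: inj_on_def)
  have img: "?h ` ?S = monoms d" 
  proof
    show "?h ` ?S \<subseteq> monoms d" by (auto simp: monoms_def)
    show "monoms d \<subseteq> ?h ` ?S"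
    proof
      fix mn assume "mn \<in> monoms d"
      then obtain a b c where "mn = (a,b,c)" "a + b + c = d" by (auto simp: monoms_def)
      then show "mn \<in> ?h ` ?S" by (auto intro!: image_eqI[of _ _ "(a,b)"])
    qed
  qed
  have "(\<Sum>mn\<in>monoms d. g mn) = (\<Sum>ab\<in>?S. g (?h ab))"
    by (subst img[symmetric], subst sum.reindex[OF inj]) simp
  also have "\<dots> = (\<Sum>ab\<in>{..d}\<times>{..d}. g (?h ab))"
  proof (rule sum.mono_neutral_left)
    show "\<forall>i\<in>{..d} \<times> {..d} - ?S. g (?h i) = 0"
      apply clarify apply (rule ccontr) using zero by (simp add: not_le)
  qed auto
  also have "\<dots> = (\<Sum>a\<le>d. \<Sum>b\<le>d. g (a, b, d - a - b))"
    by (simp add: sum.cartesian_product split_def)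
  finally show ?thesis .
qed

lemma forms_zero: "F \<in> forms d \<Longrightarrow> mn \<notin> monoms d \<Longrightarrow> F mn = 0"
  unfolding forms_def monoms_def by (cases mn) auto

lemma form_vanish_zero:
  fixes F :: "nat \<times> nat \<times> nat \<Rightarrow> 'k::field_char_0"
  assumes F: "F \<in> forms d" and van: "\<And>p. eval_form d F p = 0"
  shows "F = (\<lambda>_. 0)"
proof -
  define Cp where "Cp a = (\<Sum>b\<le>d. monom (F (a, b, d - a - b)) b)" for a
  define Pt where "Pt t = (\<Sum>a\<le>d. monom (poly (Cp a) t) a)" for t
  have key: "poly (Pt t) s = 0" for s t
  proof -
    have "poly (Pt t) s = (\<Sum>a\<le>d. \<Sum>b\<le>d. F (a, b, d - a - b) * (s^a * t^b * 1^(d-a-b)))"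
      unfolding Pt_def Cp_def by (simp add: poly_sum poly_monom sum_distrib_right sum_distrib_left mult_ac)
    also have "\<dots> = (\<Sum>(a,b,c)\<in>monoms d. F (a,b,c) * (s^a * t^b * 1^c))"
      by (subst monoms_reindex) (use F in \<open>auto simp: forms_zero monoms_def\<close>)
    also have "\<dots> = 0" using van[of "(s,t,1)"] unfolding eval_form_alt .
    finally show ?thesis .
  qed
  have Pt0: "Pt t = 0" for t using key poly_all_0_iff_0 by blast
  have Cp0: "poly (Cp a) t = 0" if "a \<le> d" for a t
  proof -
    have "coeff (Pt t) a = 0" using Pt0 by simp
    then show ?thesis using that unfolding Pt_def by (simp add: coeff_sum_monom)
  qed
  have Cp00: "Cp a = 0" if "a \<le> d" for a using that Cp0 poly_all_0_iff_0 by blast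
  have Fz: "F (a, b, d - a - b) = 0" if "a \<le> d" "b \<le> d" for a b
  proof -
    have "coeff (Cp a) b = 0" using Cp00 that by simp
    then show ?thesis using that unfolding Cp_def by (simp add: coeff_sum_monom)
  qed
  show ?thesis
  proof
    fix mn
    show "F mn = 0"
    proof (cases "mn \<in> monoms d")
      case True
      then obtain a b c where "mn = (a,b,c)" "a + b + c = d" by (auto simp: monoms_def)
      then show ?thesis using Fz[of a b] by (auto simp: add.assoc)
    next
      case False then show ?thesis using forms_zero[OF F] by blast
    qed
  qed
qed



definition DW :: "nat \<Rightarrow> (nat \<times> nat \<times> nat \<Rightarrow> 'k::field) \<Rightarrow> 'k \<times> 'k \<times> 'k \<Rightarrow> 'k \<times> 'k \<times> 'k \<Rightarrow> 'k" where
  "DW d F q w = (case w of (w0,w1,w2) \<Rightarrow>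
     w0 * pderiv_at d F (1,0,0) q + w1 * pderiv_at d F (0,1,0) q + w2 * pderiv_at d F (0,0,1) q)"

definition Wr :: "nat \<Rightarrow> (nat \<times> nat \<times> nat \<Rightarrow> 'k::field) \<Rightarrow> (nat \<times> nat \<times> nat \<Rightarrow> 'k) \<Rightarrow> 'k \<times> 'k \<times> 'k \<Rightarrow> 'k \<times> 'k \<times> 'k \<Rightarrow> 'k" where
  "Wr d F1 F2 q w = eval_form d F1 q * DW d F2 q w - eval_form d F2 q * DW d F1 q w"

definition Lpoly :: "nat \<Rightarrow> (nat \<times> nat \<times> nat \<Rightarrow> 'k::field) \<Rightarrow> 'k \<Rightarrow> 'k \<Rightarrow> 'k \<Rightarrow> 'k \<Rightarrow> 'k \<Rightarrow> 'k \<Rightarrow> 'k poly" where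
  "Lpoly d F u0 u1 u2 v0 v1 v2 = (\<Sum>(a,b,c)\<in>monoms d. Polynomial.smult (F (a,b,c)) ([:u0,v0:]^a * [:u1,v1:]^b * [:u2,v2:]^c))"

lemma pderiv_sum': "pderiv (\<Sum>i\<in>A. f i) = (\<Sum>i\<in>A. pderiv (f i))"
  by (induction A rule: infinite_finite_induct) (auto simp: pderiv_add)

lemma poly_Lpoly: "poly (Lpoly d F u0 u1 u2 v0 v1 v2) t = eval_form d F (u0 + t*v0, u1 + t*v1, u2 + t*v2)"
  unfolding Lpoly_def eval_form_alt poly_sum
  by (intro sum.cong) (auto simp: algebra_simps)

lemma ffact_Suc0[simp]: "ffact a (Suc 0) = of_nat a" by (simp add: ffact_def)

lemma pd_coef_100: "pd_coef (1,0,0) (p0,p1,p2) (a,b,c) = of_nat a * p0^(a-1) * p1^b * p2^c"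
  by (simp add: pd_coef_def)
lemma pd_coef_010: "pd_coef (0,1,0) (p0,p1,p2) (a,b,c) = of_nat b * p0^a * p1^(b-1) * p2^c"
  by (simp add: pd_coef_def)
lemma pd_coef_001: "pd_coef (0,0,1) (p0,p1,p2) (a,b,c) = of_nat c * p0^a * p1^b * p2^(c-1)"
  by (simp add: pd_coef_def)

lemma poly_pderiv_mono:
  "poly (pderiv ([:u0,v0:]^a * [:u1,v1:]^b * [:u2,v2:]^c)) t =
     v0 * (of_nat a * (u0+t*v0)^(a-1) * (u1+t*v1)^b * (u2+t*v2)^c)
   + v1 * (of_nat b * (u0+t*v0)^a * (u1+t*v1)^(b-1) * (u2+t*v2)^c)
   + v2 * (of_nat c * (u0+t*v0)^a * (u1+t*v1)^b * (u2+t*v2)^(c-1))"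
  by (simp add: pderiv_mult pderiv_power pderiv_pCons algebra_simps)

lemma poly_pderiv_Lpoly:
  "poly (pderiv (Lpoly d F u0 u1 u2 v0 v1 v2)) t = DW d F (u0 + t*v0, u1 + t*v1, u2 + t*v2) (v0,v1,v2)"
proof -
  have "poly (pderiv (Lpoly d F u0 u1 u2 v0 v1 v2)) t =
    (\<Sum>(a,b,c)\<in>monoms d. F (a,b,c) * (v0 * (of_nat a * (u0+t*v0)^(a-1) * (u1+t*v1)^b * (u2+t*v2)^c)
   + v1 * (of_nat b * (u0+t*v0)^a * (u1+t*v1)^(b-1) * (u2+t*v2)^c)
   + v2 * (of_nat c * (u0+t*v0)^a * (u1+t*v1)^b * (u2+t*v2)^(c-1))))"
    unfolding Lpoly_def pderiv_sum' poly_sum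
    by (intro sum.cong refl) (auto simp: pderiv_smult poly_pderiv_mono)
  also have "\<dots> = (\<Sum>mn\<in>monoms d. v0 * (F mn * pd_coef (1,0,0) (u0 + t*v0, u1 + t*v1, u2 + t*v2) mn)
      + v1 * (F mn * pd_coef (0,1,0) (u0 + t*v0, u1 + t*v1, u2 + t*v2) mn)
      + v2 * (F mn * pd_coef (0,0,1) (u0 + t*v0, u1 + t*v1, u2 + t*v2) mn))"
    by (intro sum.cong refl) (clarsimp simp: pd_coef_def algebra_simps)
  also have "\<dots> = DW d F (u0 + t*v0, u1 + t*v1, u2 + t*v2) (v0,v1,v2)"
    unfolding DW_def pderiv_at_alt
    by (simp add: sum_distrib_left sum.distrib)
  finally show ?thesis .
qed

lemma pderiv_at_lin: "pderiv_at d (\<lambda>mn. F mn - c * G mn) ijl p = pderiv_at d F ijl p - c * pderiv_at d G ijl p"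
  unfolding pderiv_at_alt by (simp add: sum_subtractf sum_distrib_left algebra_simps)

lemma eval_form_lin: "eval_form d (\<lambda>mn. F mn - c * G mn) p = eval_form d F p - c * eval_form d G p"
  unfolding eval_form_def pderiv_at_lin ..

lemma DW_lin: "DW d (\<lambda>mn. F mn - c * G mn) q w = DW d F q w - c * DW d G q w"
  unfolding DW_def pderiv_at_lin by (cases w) (simp add: algebra_simps)

lemma two_dot:
  fixes F1 F2 :: "nat \<times> nat \<times> nat \<Rightarrow> 'k::field_char_0"
  assumes F1: "F1 \<in> forms d" and F2: "F2 \<in> forms d" and nz: "F2 \<noteq> (\<lambda>_. 0)"
    and indep: "\<And>c. F1 \<noteq> (\<lambda>mn. c * F2 mn)"
  shows "\<exists>q w. Wr d F1 F2 q w \<noteq> 0"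
proof (rule ccontr)
  assume "\<not> ?thesis"
  then have W0: "Wr d F1 F2 q w = 0" for q w by blast
  obtain u where u: "eval_form d F2 u \<noteq> 0" using form_vanish_zero[OF F2] nz by blast
  obtain u0 u1 u2 where uu: "u = (u0,u1,u2)" by (cases u) auto
  define c where "c = eval_form d F1 u / eval_form d F2 u"
  define h where "h = (\<lambda>mn. F1 mn - c * F2 mn)"
  have h: "h \<in> forms d" unfolding forms_def h_def
  proof (intro CollectI allI impI)
    fix a b e assume "F1 (a,b,e) - c * F2 (a,b,e) \<noteq> 0"
    then have "F1 (a,b,e) \<noteq> 0 \<or> F2 (a,b,e) \<noteq> 0" by auto
    then show "a + b + e = d" using F1 F2 unfolding forms_def by blast
  qed
  have hnz: "h \<noteq> (\<lambda>_. 0)"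
  proof
    assume "h = (\<lambda>_. 0)"
    then have "F1 = (\<lambda>mn. c * F2 mn)" unfolding h_def by (auto simp: fun_eq_iff)
    with indep show False by blast
  qed
  have hu: "eval_form d h u = 0" unfolding h_def eval_form_lin c_def using u by simp
  have Wh: "Wr d h F2 q w = 0" for q w
    using W0[of q w] unfolding Wr_def h_def eval_form_lin DW_lin by (simp add: algebra_simps)
  have "eval_form d h p = 0" for p
  proof -
    obtain p0 p1 p2 where pp: "p = (p0,p1,p2)" by (cases p) auto
    define Ph where "Ph = Lpoly d h u0 u1 u2 (p0-u0) (p1-u1) (p2-u2)"
    define P2 where "P2 = Lpoly d F2 u0 u1 u2 (p0-u0) (p1-u1) (p2-u2)"
    have "Ph = 0"
    proof (rule U_lemma)
      show "poly P2 0 \<noteq> 0" using u uu by (simp add: P2_def poly_Lpoly)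
      show "poly Ph 0 = 0" using hu uu by (simp add: Ph_def poly_Lpoly)
      have "poly (Ph * pderiv P2 - P2 * pderiv Ph) t = 0" for t
        using Wh[of "(u0 + t*(p0-u0), u1 + t*(p1-u1), u2 + t*(p2-u2))" "(p0-u0, p1-u1, p2-u2)"]
        by (simp add: Ph_def P2_def poly_Lpoly poly_pderiv_Lpoly Wr_def)
      then have "Ph * pderiv P2 - P2 * pderiv Ph = 0" using poly_all_0_iff_0 by blast
      then show "Ph * pderiv P2 = P2 * pderiv Ph" by simp
    qed
    then have "poly Ph 1 = 0" by simp
    then show ?thesis by (simp add: Ph_def poly_Lpoly pp)
  qed
  then have "h = (\<lambda>_. 0)" using form_vanish_zero[OF h] by blast
  with hnz show False by simp
qed



section \<open>Counting\<close>

lemma monoms_Suc: "monoms (Suc d) = (\<lambda>(a,b,c). (Suc a, b, c)) ` monoms d \<union> (\<lambda>b. (0, b, Suc d - b)) ` {..Suc d}"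
proof -
  have "mn \<in> monoms (Suc d) \<longleftrightarrow> mn \<in> (\<lambda>(a,b,c). (Suc a, b, c)) ` monoms d \<union> (\<lambda>b. (0, b, Suc d - b)) ` {..Suc d}" for mn
  proof -
  obtain a b c where mn: "mn = (a,b,c)" by (cases mn) auto
  show ?thesis
  proof (cases a)
    case 0 then show ?thesis by (auto simp: mn monoms_def)
  next
    case (Suc a') then show ?thesis
      by (auto simp: mn monoms_def intro!: image_eqI[of _ _ "(a',b,c)"])
  qed
  qed
  then show ?thesis by blast
qed

lemma card_monoms: "card (monoms d) = (d + 2) choose 2"
proof (induction d)
  case 0
  have "monoms 0 = {(0,0,0)}" by (auto simp: monoms_def)
  then show ?case by (simp add: numeral_2_eq_2)
next
  case (Suc d)
  have inj1: "inj_on (\<lambda>(a,b,c). (Suc a, b, c)) (monoms d)" by (auto simp: inj_on_def)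
  have inj2: "inj_on (\<lambda>b. (0::nat, b, Suc d - b)) {..Suc d}" by (auto simp: inj_on_def)
  have disj: "(\<lambda>(a,b,c). (Suc a, b, c)) ` monoms d \<inter> (\<lambda>b. (0::nat, b, Suc d - b)) ` {..Suc d} = {}" by auto
  have "card (monoms (Suc d)) = card ((\<lambda>(a,b,c). (Suc a, b, c)) ` monoms d) + card ((\<lambda>b. (0::nat, b, Suc d - b)) ` {..Suc d})"
    unfolding monoms_Suc by (rule card_Un_disjoint[OF _ _ disj]) auto
  also have "card ((\<lambda>(a,b,c). (Suc a, b, c)) ` monoms d) = card (monoms d)" by (rule card_image[OF inj1])
  also have "card ((\<lambda>b. (0::nat, b, Suc d - b)) ` {..Suc d}) = d + 2" by (subst card_image[OF inj2]) simp
  also have "card (monoms d) + (d + 2) = (Suc d + 2) choose 2" using Suc by (simp add: numeral_2_eq_2)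
  finally show ?case .
qed

definition mp_pairs :: "nat \<Rightarrow> (nat \<times> nat) list" where
  "mp_pairs m = concat (map (\<lambda>k. map (\<lambda>i. (i, k - i)) [0..<Suc k]) [0..<m])"

lemma mp_pairs_Suc: "mp_pairs (Suc m) = mp_pairs m @ map (\<lambda>i. (i, m - i)) [0..<Suc m]"
  by (simp add: mp_pairs_def)

lemma set_mp_pairs: "set (mp_pairs m) = {(i,j). i + j < m}"
proof (induction m)
  case 0 then show ?case by (simp add: mp_pairs_def)
next
  case (Suc m)
  have "set (map (\<lambda>i. (i, m - i)) [0..<Suc m]) = {(i,j). i + j = m}" by force
  then show ?case unfolding mp_pairs_Suc set_append Suc by auto
qed

lemma distinct_mp_pairs: "distinct (mp_pairs m)"
proof (induction m)
  case 0 then show ?case by (simp add: mp_pairs_def)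
next
  case (Suc m)
  show ?case unfolding mp_pairs_Suc distinct_append set_mp_pairs
    using Suc by (auto simp: distinct_map inj_on_def)
qed

lemma length_mp_pairs: "length (mp_pairs m) = (m + 1) choose 2"
proof (induction m)
  case 0 then show ?case by (simp add: mp_pairs_def)
next
  case (Suc m)
  then show ?case unfolding mp_pairs_Suc by (simp add: numeral_2_eq_2)
qed

definition mp_rows :: "nat \<Rightarrow> row list" where
  "mp_rows m = map (\<lambda>(i,j). RP i j) (mp_pairs m)"

definition dot_rows :: "nat \<Rightarrow> row list" where
  "dot_rows s = concat (map (\<lambda>i. [RQ i, RW i]) [0..<s])"

definition all_rows :: "nat \<Rightarrow> nat \<Rightarrow> row list" where
  "all_rows m s = mp_rows m @ dot_rows s"

lemma length_all_rows: "length (all_rows m s) = ((m + 1) choose 2) + 2 * s"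
proof -
  have "length (dot_rows s) = 2 * s" by (induction s) (auto simp: dot_rows_def)
  then show ?thesis by (simp add: all_rows_def mp_rows_def length_mp_pairs)
qed

lemma all_rows_Suc: "all_rows m (Suc s) = all_rows m s @ [RQ s, RW s]"
  by (simp add: all_rows_def dot_rows_def)

lemma set_all_rows: "set (all_rows m s) = {RP i j | i j. i + j < m} \<union> {RQ i | i. i < s} \<union> {RW i | i. i < s}"
  by (auto simp: all_rows_def mp_rows_def dot_rows_def set_mp_pairs)

definition mp_cols :: "nat \<Rightarrow> nat \<Rightarrow> (nat \<times> nat \<times> nat) list" where
  "mp_cols d m = map (\<lambda>(i,j). (i, j, d - i - j)) (mp_pairs m)"

section \<open>Euler relation\<close>

lemma ffact_Suc: "ffact a (Suc i) = ffact a i * of_nat (a - i)"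
  by (simp add: ffact_def)

lemma ffact_zero: "a < i \<Longrightarrow> ffact a i = 0"
  unfolding ffact_def by (rule prod_zero) (auto intro: bexI[of _ a])

lemma euler_term:
  assumes "a + b + c = d"
  shows "p0 * pd_coef (Suc i, j, l) (p0,p1,p2) (a,b,c) + p1 * pd_coef (i, Suc j, l) (p0,p1,p2) (a,b,c)
     + p2 * pd_coef (i, j, Suc l) (p0,p1,p2) (a,b,c) = of_nat (d - i - j - l) * pd_coef (i, j, l) (p0,p1,p2) (a,b,c)"
proof (cases "i \<le> a \<and> j \<le> b \<and> l \<le> c")
  case True
  have "d - i - j - l = (a - i) + (b - j) + (c - l)" using True assms by arith
  then have e: "of_nat (d - i - j - l) = (of_nat (a - i) + of_nat (b - j) + of_nat (c - l) :: 'a)"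
    by (simp only: of_nat_add)
  have t0: "p0 * pd_coef (Suc i, j, l) (p0,p1,p2) (a,b,c) = of_nat (a - i) * pd_coef (i, j, l) (p0,p1,p2) (a,b,c)"
  proof (cases "a - i")
    case 0 then show ?thesis by (simp add: pd_coef_def ffact_Suc)
  next
    case (Suc n)
    then have "a - Suc i = n" by simp
    then show ?thesis using Suc by (simp add: pd_coef_def ffact_Suc mult_ac)
  qed
  have t1: "p1 * pd_coef (i, Suc j, l) (p0,p1,p2) (a,b,c) = of_nat (b - j) * pd_coef (i, j, l) (p0,p1,p2) (a,b,c)"
  proof (cases "b - j")
    case 0 then show ?thesis by (simp add: pd_coef_def ffact_Suc)
  next
    case (Suc n)
    then have "b - Suc j = n" by simp
    then show ?thesis using Suc by (simp add: pd_coef_def ffact_Suc mult_ac)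
  qed
  have t2: "p2 * pd_coef (i, j, Suc l) (p0,p1,p2) (a,b,c) = of_nat (c - l) * pd_coef (i, j, l) (p0,p1,p2) (a,b,c)"
  proof (cases "c - l")
    case 0 then show ?thesis by (simp add: pd_coef_def ffact_Suc)
  next
    case (Suc n)
    then have "c - Suc l = n" by simp
    then show ?thesis using Suc by (simp add: pd_coef_def ffact_Suc mult_ac)
  qed
  show ?thesis unfolding t0 t1 t2 e by (simp add: algebra_simps)
next
  case False
  then show ?thesis unfolding pd_coef_def by (auto simp: ffact_zero ffact_Suc)
qed



lemma euler:
  "p0 * pderiv_at d F (Suc i,j,l) (p0,p1,p2) + p1 * pderiv_at d F (i,Suc j,l) (p0,p1,p2)
   + p2 * pderiv_at d F (i,j,Suc l) (p0,p1,p2) = of_nat (d-i-j-l) * pderiv_at d F (i,j,l) (p0,p1,p2)"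
proof -
  have "p0 * pderiv_at d F (Suc i,j,l) (p0,p1,p2) + p1 * pderiv_at d F (i,Suc j,l) (p0,p1,p2)
   + p2 * pderiv_at d F (i,j,Suc l) (p0,p1,p2) = (\<Sum>mn\<in>monoms d. F mn * (p0 * pd_coef (Suc i, j, l) (p0,p1,p2) mn
     + p1 * pd_coef (i, Suc j, l) (p0,p1,p2) mn + p2 * pd_coef (i, j, Suc l) (p0,p1,p2) mn))"
    unfolding pderiv_at_alt by (simp add: sum_distrib_left sum.distrib algebra_simps)
  also have "\<dots> = (\<Sum>mn\<in>monoms d. F mn * (of_nat (d-i-j-l) * pd_coef (i, j, l) (p0,p1,p2) mn))"
    by (intro sum.cong refl) (auto simp: monoms_def euler_term)
  also have "\<dots> = of_nat (d-i-j-l) * pderiv_at d F (i,j,l) (p0,p1,p2)"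
    unfolding pderiv_at_alt by (simp add: sum_distrib_left mult_ac)
  finally show ?thesis .
qed

lemma mult_point_from_l0:
  assumes p2: "p2 \<noteq> 0" and l0: "\<And>i j. i + j < m \<Longrightarrow> pderiv_at d F (i,j,0) (p0,p1,p2) = 0"
  shows "in_mult_point d m (p0,p1,p2) F"
proof -
  have "\<forall>i j. i + j + l < m \<longrightarrow> pderiv_at d F (i,j,l) (p0,p1,p2) = 0" for l
  proof (induction l)
    case 0 then show ?case using l0 by simp
  next
    case (Suc l)
    show ?case
    proof (intro allI impI)
      fix i j assume ijl: "i + j + Suc l < m"
      have "p2 * pderiv_at d F (i,j,Suc l) (p0,p1,p2) = 0"
        using euler[of p0 d F i j l p1 p2] Suc.IH ijl by auto
      then show "pderiv_at d F (i,j,Suc l) (p0,p1,p2) = 0" using p2 by simp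
    qed
  qed
  then show ?thesis unfolding in_mult_point_def by blast
qed

lemma forms_iff: "F \<in> forms d \<longleftrightarrow> (\<forall>mn. mn \<notin> monoms d \<longrightarrow> F mn = 0)"
  unfolding forms_def monoms_def by auto

lemma H_rows:
  assumes "F \<in> H0_IX d m (par_p x) s (par_q x) (par_w x)" "r \<in> set (all_rows m s)"
  shows "ell d r x F = 0"
  using assms unfolding H0_IX_def set_all_rows in_mult_point_def
  by (auto simp: ell_RP in_2dot_ell)

lemma rows_H:
  assumes F: "F \<in> forms d" and x2: "x 2 \<noteq> 0" and rows: "\<And>r. r \<in> set (all_rows m s) \<Longrightarrow> ell d r x F = 0"
  shows "F \<in> H0_IX d m (par_p x) s (par_q x) (par_w x)"
proof -
  have "in_mult_point d m (x 0, x 1, x 2) F"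
  proof (rule mult_point_from_l0[OF x2])
    fix i j assume "i + j < m"
    then have "ell d (RP i j) x F = 0" using rows by (auto simp: set_all_rows)
    then show "pderiv_at d F (i,j,0) (x 0, x 1, x 2) = 0" by (simp add: ell_RP par_p_def)
  qed
  moreover have "in_2dot d (par_q x i) (par_w x i) F" if "i < s" for i
    using rows that by (auto simp: in_2dot_ell set_all_rows)
  ultimately show ?thesis using F unfolding H0_IX_def par_p_def by auto
qed

definition upd :: "(nat \<Rightarrow> 'k) \<Rightarrow> nat \<Rightarrow> 'k \<times> 'k \<times> 'k \<Rightarrow> 'k \<times> 'k \<times> 'k \<Rightarrow> nat \<Rightarrow> 'k" where
  "upd x s q w = (\<lambda>i. if i = 3+6*s then fst q else if i = 3+6*s+1 then fst (snd q) else
     if i = 3+6*s+2 then snd (snd q) else if i = 3+6*s+3 then fst w else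
     if i = 3+6*s+4 then fst (snd w) else if i = 3+6*s+5 then snd (snd w) else x i)"

lemma upd_p[simp]: "par_p (upd x s q w) = par_p x" by (simp add: par_p_def upd_def)
lemma upd_2[simp]: "upd x s q w 2 = x 2" by (simp add: upd_def)
lemma upd_q_old: "i < s \<Longrightarrow> par_q (upd x s q w) i = par_q x i" by (simp add: par_q_def upd_def)
lemma upd_w_old: "i < s \<Longrightarrow> par_w (upd x s q w) i = par_w x i" by (simp add: par_w_def upd_def)
lemma upd_q_new[simp]: "par_q (upd x s q w) s = q" by (cases q) (simp add: par_q_def upd_def)
lemma upd_w_new[simp]: "par_w (upd x s q w) s = w" by (cases w) (simp add: par_w_def upd_def)

lemma kappa_upd: "r \<in> set (all_rows m s) \<Longrightarrow> kappa r (upd x s q w) = kappa r x"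
  by (auto simp: set_all_rows upd_q_old upd_w_old fun_eq_iff)

lemma ell_upd: "r \<in> set (all_rows m s) \<Longrightarrow> ell d r (upd x s q w) F = ell d r x F"
  unfolding ell_def using kappa_upd by metis

lemma Mx_upd: "set Rs \<subseteq> set (all_rows m s) \<Longrightarrow> Mx Rs Cs (upd x s q w) = Mx Rs Cs x"
proof -
  assume sub: "set Rs \<subseteq> set (all_rows m s)"
  have "kappa (Rs ! i) (upd x s q w) = kappa (Rs ! i) x" if "i < length Rs" for i
    using that sub by (intro kappa_upd) auto
  then show ?thesis unfolding Mx_def by (intro eq_matI) auto
qed

lemma LA3:
  fixes x :: "nat \<Rightarrow> 'k::field"
  assumes len: "length Cs = length Rs" and dist: "distinct Cs" and sub: "set Cs \<subseteq> monoms d"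
    and ker: "\<And>F. (\<And>mn. mn \<notin> set Cs \<Longrightarrow> F mn = 0) \<Longrightarrow> (\<And>r. r \<in> set Rs \<Longrightarrow> ell d r x F = 0) \<Longrightarrow> F = (\<lambda>_. 0)"
  shows "det (Mx Rs Cs x) \<noteq> 0"
proof
  assume "det (Mx Rs Cs x) = 0"
  then obtain v where v: "v \<in> carrier_vec (length Rs)" "v \<noteq> 0\<^sub>v (length Rs)" "Mx Rs Cs x *\<^sub>v v = 0\<^sub>v (length Rs)"
    using det_0_iff_vec_prod_zero_field[OF Mx_carrier[OF len]] by auto
  have "vf Cs v = (\<lambda>_. 0)"
  proof (rule ker)
    show "vf Cs v mn = 0" if "mn \<notin> set Cs" for mn using vf_out that by metis
    fix r assume "r \<in> set Rs"
    then obtain a where a: "a < length Rs" "r = Rs!a" by (auto simp: in_set_conv_nth)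
    have "(Mx Rs Cs x *\<^sub>v v) $ a = ell d (Rs!a) x (vf Cs v)"
      by (rule Mx_mult[OF sub]) (use v(1) len a in auto)
    then show "ell d r x (vf Cs v) = 0" using v(3) a by simp
  qed
  then have "v $ k = 0" if "k < length Rs" for k
    using vf_nth[OF dist, of k v] that len \<open>vf Cs v = (\<lambda>_. 0)\<close> by simp
  then have "v = 0\<^sub>v (length Rs)" using v(1) by (intro eq_vecI) auto
  with v(2) show False by simp
qed

lemma ffact_self_nz: "ffact i i \<noteq> (0::'k::field_char_0)"
  unfolding ffact_def by (auto simp: prod_zero_iff)

lemma pd_coef_base: "pd_coef (i,j,0) (0,0,1::'k::field) (a,b,c) = (if a = i \<and> b = j then ffact i i * ffact j j else 0)"
  unfolding pd_coef_def
  by (cases "a < i"; cases "b < j") (auto simp: ffact_zero)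

lemma ell_base:
  assumes "i + j \<le> d"
  shows "ell d (RP i j) (\<lambda>n. if n = 2 then 1 else 0 :: 'k::field) F = F (i, j, d - i - j) * (ffact i i * ffact j j)"
proof -
  have pp: "par_p (\<lambda>n. if n = 2 then 1 else 0 :: 'k) = (0,0,1)" by (simp add: par_p_def)
  have mem: "(i, j, d - i - j) \<in> monoms d" using assms by (auto simp: monoms_def)
  have "ell d (RP i j) (\<lambda>n. if n = 2 then 1 else 0 :: 'k) F = (\<Sum>mn\<in>monoms d. F mn * pd_coef (i,j,0) (0,0,1::'k) mn)"
    by (simp add: ell_def pp)
  moreover have z: "(\<Sum>mn\<in>monoms d - {(i, j, d - (i + j))}. F mn * pd_coef (i,j,0) (0,0,1::'k) mn) = 0"
      by (rule sum.neutral) (auto simp: pd_coef_base monoms_def split: if_splits)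
  have "(\<Sum>mn\<in>monoms d. F mn * pd_coef (i,j,0) (0,0,1::'k) mn) = F (i, j, d - i - j) * pd_coef (i,j,0) (0,0,1::'k) (i, j, d - i - j)"
    by (subst sum.remove[OF _ mem]) (simp_all add: z)
  ultimately show ?thesis by (simp add: pd_coef_base)
qed



definition x_base :: "nat \<Rightarrow> 'k::field" where "x_base = (\<lambda>n. if n = 2 then 1 else 0)"

lemma base_case:
  assumes md: "m \<le> d + 1"
  shows "det (Mx (mp_rows m) (mp_cols d m) (x_base :: nat \<Rightarrow> 'k::field_char_0)) \<noteq> 0"
    and "distinct (mp_cols d m)" and "set (mp_cols d m) \<subseteq> monoms d"
    and "length (mp_cols d m) = length (mp_rows m)"
proof -
  show dist: "distinct (mp_cols d m)"
    unfolding mp_cols_def by (subst distinct_map) (auto simp: distinct_mp_pairs inj_on_def)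
  show sub: "set (mp_cols d m) \<subseteq> monoms d"
    using md by (auto simp: mp_cols_def set_mp_pairs monoms_def)
  show len: "length (mp_cols d m) = length (mp_rows m)" by (simp add: mp_cols_def mp_rows_def)
  show "det (Mx (mp_rows m) (mp_cols d m) (x_base :: nat \<Rightarrow> 'k::field_char_0)) \<noteq> 0"
  proof (rule LA3[OF len dist sub])
    fix F :: "nat \<times> nat \<times> nat \<Rightarrow> 'k"
    assume supp: "\<And>mn. mn \<notin> set (mp_cols d m) \<Longrightarrow> F mn = 0"
      and rows: "\<And>r. r \<in> set (mp_rows m) \<Longrightarrow> ell d r x_base F = 0"
    show "F = (\<lambda>_. 0)"
    proof
      fix mn
      show "F mn = 0"
      proof (cases "mn \<in> set (mp_cols d m)")
        case True
        then obtain i j where ij: "i + j < m" "mn = (i, j, d - i - j)" by (auto simp: mp_cols_def set_mp_pairs)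
        have "ell d (RP i j) x_base F = 0" using rows ij by (auto simp: mp_rows_def set_mp_pairs)
        moreover have "ell d (RP i j) x_base F = F (i, j, d - i - j) * (ffact i i * ffact j j)"
          unfolding x_base_def by (rule ell_base) (use ij md in auto)
        ultimately show ?thesis using ij ffact_self_nz[where 'k='k] by simp
      next
        case False then show ?thesis using supp by blast
      qed
    qed
  qed
qed

lemma exist_good:
  assumes md: "m \<le> d + 1"
  shows "\<exists>(x0 :: nat \<Rightarrow> 'k::field_char_0) Rs Cs. x0 2 \<noteq> 0 \<and> length Cs = length Rs \<and> distinct Cs \<and> set Cs \<subseteq> monoms d \<and>
     length Rs = min (((m+1) choose 2) + 2*s) (card (monoms d)) \<and> set Rs \<subseteq> set (all_rows m s) \<and>
     (((m+1) choose 2) + 2*s \<le> card (monoms d) \<longrightarrow> Rs = all_rows m s) \<and> det (Mx Rs Cs x0) \<noteq> 0"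
proof (induction s)
  case 0
  note b = base_case(1)[OF md, where 'k='k] base_case(2-4)[OF md]
  have le: "(m+1) choose 2 \<le> card (monoms d)"
  proof -
    have "length (mp_cols d m) = card (set (mp_cols d m))" using b(2) by (simp add: distinct_card)
    also have "\<dots> \<le> card (monoms d)" using b(3) by (intro card_mono) auto
    finally show ?thesis using b(4) by (simp add: mp_rows_def length_mp_pairs)
  qed
  show ?case
    apply (rule exI[of _ x_base], rule exI[of _ "mp_rows m"], rule exI[of _ "mp_cols d m"])
    using b le by (auto simp: x_base_def all_rows_def dot_rows_def mp_rows_def length_mp_pairs)
next
  case (Suc s)
  let ?N = "card (monoms d)"
  let ?c = "((m+1) choose 2) + 2*s"
  from Suc.IH obtain x0 :: "nat \<Rightarrow> 'k" and Rs Cs where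
    x02: "x0 2 \<noteq> 0" and len: "length Cs = length Rs" and dist: "distinct Cs" and sub: "set Cs \<subseteq> monoms d"
    and lenR: "length Rs = min ?c ?N" and subR: "set Rs \<subseteq> set (all_rows m s)"
    and allR: "?c \<le> ?N \<longrightarrow> Rs = all_rows m s" and det: "det (Mx Rs Cs x0) \<noteq> 0" by blast
  have subR': "set (all_rows m s) \<subseteq> set (all_rows m (Suc s))" by (auto simp: all_rows_Suc)
  show ?case
  proof (cases "?N \<le> ?c")
    case True
    show ?thesis
      apply (rule exI[of _ x0], rule exI[of _ Rs], rule exI[of _ Cs])
      using True x02 len dist sub lenR subR subR' det by auto
  next
    case False
    then have Rs: "Rs = all_rows m s" and lc: "length Rs = ?c" using allR lenR by auto
    have cardCs: "card (set Cs) = ?c" using dist len lc by (simp add: distinct_card)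
    have "\<not> monoms d \<subseteq> set Cs"
    proof
      assume "monoms d \<subseteq> set Cs"
      then have "?N \<le> card (set Cs)" by (intro card_mono) auto
      with cardCs False show False by simp
    qed
    then obtain b1 where b1: "b1 \<in> monoms d" "b1 \<notin> set Cs" by auto
    obtain f1 where f1: "f1 b1 = 1" "\<And>mn. mn \<notin> set Cs \<Longrightarrow> mn \<noteq> b1 \<Longrightarrow> f1 mn = 0"
      "\<And>r. r \<in> set Rs \<Longrightarrow> ell d r x0 f1 = 0"
      using LA1[OF len dist sub det b1] by blast
    have f1F: "f1 \<in> forms d" unfolding forms_iff using f1(2) sub b1 by auto
    have f1nz: "f1 \<noteq> (\<lambda>_. 0)"
    proof
      assume "f1 = (\<lambda>_. 0)"
      then show False using f1(1) by simp
    qed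
    show ?thesis
    proof (cases "Suc ?c = ?N")
      case True
      obtain q where q: "eval_form d f1 q \<noteq> 0" using form_vanish_zero[OF f1F] f1nz by blast
      define x1 where "x1 = upd x0 s q (0,0,0)"
      let ?Rs = "Rs @ [RQ s]" and ?Cs = "Cs @ [b1]"
      have len': "length ?Cs = length ?Rs" using len by simp
      have dist': "distinct ?Cs" using dist b1 by simp
      have sub': "set ?Cs \<subseteq> monoms d" using sub b1 by simp
      have det': "det (Mx ?Rs ?Cs x1) \<noteq> 0"
      proof (rule LA3[OF len' dist' sub'])
        fix F :: "nat \<times> nat \<times> nat \<Rightarrow> 'k"
        assume supp: "\<And>mn. mn \<notin> set ?Cs \<Longrightarrow> F mn = 0"
          and rows: "\<And>r. r \<in> set ?Rs \<Longrightarrow> ell d r x1 F = 0"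
        define G where "G = (\<lambda>mn. F mn - F b1 * f1 mn)"
        have "G = (\<lambda>_. 0)"
        proof (rule LA2[OF len dist sub det])
          show "G mn = 0" if "mn \<notin> set Cs" for mn
            using that supp[of mn] f1(1) f1(2)[of mn] by (cases "mn = b1") (auto simp: G_def)
          fix r assume r: "r \<in> set Rs"
          have "ell d r x0 G = ell d r x0 F - F b1 * ell d r x0 f1"
            unfolding G_def ell_diff[where G="\<lambda>mn. F b1 * f1 mn"] ell_scale ..
          also have "ell d r x0 F = ell d r x1 F" unfolding x1_def using r Rs by (simp add: ell_upd)
          finally show "ell d r x0 G = 0" using rows r f1(3)[OF r] by simp
        qed
        then have FF: "F = (\<lambda>mn. F b1 * f1 mn)" unfolding G_def by (auto simp: fun_eq_iff)
        have "ell d (RQ s) x1 F = 0" using rows by simp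
        then have "F b1 * eval_form d f1 q = 0"
          by (subst (asm) FF) (simp add: ell_scale ell_RQ x1_def)
        then have "F b1 = 0" using q by simp
        then show "F = (\<lambda>_. 0)" using FF by simp
      qed
      show ?thesis
        apply (rule exI[of _ x1], rule exI[of _ ?Rs], rule exI[of _ ?Cs])
        using True x02 len' dist' sub' lc det' Rs by (auto simp: x1_def all_rows_Suc)
    next
      case False2: False
      have cardCs1: "card (insert b1 (set Cs)) = Suc ?c" using cardCs b1 by simp
      have "\<not> monoms d \<subseteq> insert b1 (set Cs)"
      proof
        assume "monoms d \<subseteq> insert b1 (set Cs)"
        then have "?N \<le> card (insert b1 (set Cs))" by (intro card_mono) auto
        with cardCs1 False False2 show False by simp
      qed
      then obtain b2 where b2: "b2 \<in> monoms d" "b2 \<notin> set Cs" "b2 \<noteq> b1" by auto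
      obtain f2 where f2: "f2 b2 = 1" "\<And>mn. mn \<notin> set Cs \<Longrightarrow> mn \<noteq> b2 \<Longrightarrow> f2 mn = 0"
        "\<And>r. r \<in> set Rs \<Longrightarrow> ell d r x0 f2 = 0"
        using LA1[OF len dist sub det b2(1,2)] by blast
      have f2F: "f2 \<in> forms d" unfolding forms_iff using f2(2) sub b2 by auto
      have f2nz: "f2 \<noteq> (\<lambda>_. 0)"
    proof
      assume "f2 = (\<lambda>_. 0)"
      then show False using f2(1) by simp
    qed
      have f2b1: "f2 b1 = 0" using f2(2) b1 b2 by auto
      have f1b2: "f1 b2 = 0" using f1(2) b1 b2 by auto
      have ind: "f1 \<noteq> (\<lambda>mn. c * f2 mn)" for c
      proof
        assume "f1 = (\<lambda>mn. c * f2 mn)"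
        then have "f1 b1 = c * f2 b1" by simp
        with f1(1) f2b1 show False by simp
      qed
      obtain q w where qw: "Wr d f1 f2 q w \<noteq> 0" using two_dot[OF f1F f2F f2nz ind] by blast
      define x1 where "x1 = upd x0 s q w"
      let ?Rs = "Rs @ [RQ s, RW s]" and ?Cs = "Cs @ [b1, b2]"
      have len': "length ?Cs = length ?Rs" using len by simp
      have dist': "distinct ?Cs" using dist b1 b2 by auto
      have sub': "set ?Cs \<subseteq> monoms d" using sub b1 b2 by simp
      have ellQ: "ell d (RQ s) x1 F = eval_form d F q" for F by (simp add: ell_RQ x1_def)
      have ellW: "ell d (RW s) x1 F = DW d F q w" for F by (cases w) (simp add: ell_RW x1_def DW_def)
      have det': "det (Mx ?Rs ?Cs x1) \<noteq> 0"
      proof (rule LA3[OF len' dist' sub'])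
        fix F :: "nat \<times> nat \<times> nat \<Rightarrow> 'k"
        assume supp: "\<And>mn. mn \<notin> set ?Cs \<Longrightarrow> F mn = 0"
          and rows: "\<And>r. r \<in> set ?Rs \<Longrightarrow> ell d r x1 F = 0"
        define al where "al = F b1"
        define be where "be = F b2"
        define G where "G = (\<lambda>mn. (F mn - al * f1 mn) - be * f2 mn)"
        have "G = (\<lambda>_. 0)"
        proof (rule LA2[OF len dist sub det])
          show "G mn = 0" if "mn \<notin> set Cs" for mn
            using that supp[of mn] f1(1) f1(2)[of mn] f2(1) f2(2)[of mn] f2b1 f1b2
            by (cases "mn = b1"; cases "mn = b2") (auto simp: G_def al_def be_def)
          fix r assume r: "r \<in> set Rs"
          have "ell d r x0 G = ell d r x0 F - al * ell d r x0 f1 - be * ell d r x0 f2"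
            unfolding G_def ell_diff[where G="\<lambda>mn. be * f2 mn"] ell_diff[where G="\<lambda>mn. al * f1 mn"] ell_scale ..
          also have "ell d r x0 F = ell d r x1 F" unfolding x1_def using r Rs by (simp add: ell_upd)
          finally show "ell d r x0 G = 0" using rows r f1(3)[OF r] f2(3)[OF r] by simp
        qed
        then have FF: "F = (\<lambda>mn. al * f1 mn + be * f2 mn)" unfolding G_def by (auto simp: fun_eq_iff algebra_simps)
        have lin: "ell d r x1 F = al * ell d r x1 f1 + be * ell d r x1 f2" for r
          by (subst FF) (simp add: ell_add ell_scale)
        have e1: "al * eval_form d f1 q + be * eval_form d f2 q = 0"
          using rows[of "RQ s"] lin[of "RQ s"] by (simp add: ellQ)
        have e2: "al * DW d f1 q w + be * DW d f2 q w = 0"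
          using rows[of "RW s"] lin[of "RW s"] by (simp add: ellW)
        have h1: "al * eval_form d f1 q = - (be * eval_form d f2 q)" using e1 by (simp only: add_eq_0_iff2)
        have h2: "al * DW d f1 q w = - (be * DW d f2 q w)" using e2 by (simp only: add_eq_0_iff2)
        have h3: "be * eval_form d f2 q = - (al * eval_form d f1 q)" using e1 by (simp only: add_eq_0_iff)
        have h4: "be * DW d f2 q w = - (al * DW d f1 q w)" using e2 by (simp only: add_eq_0_iff)
        have "al * Wr d f1 f2 q w = 0"
        proof -
          have "al * Wr d f1 f2 q w = (al * eval_form d f1 q) * DW d f2 q w - eval_form d f2 q * (al * DW d f1 q w)"
            unfolding Wr_def by (simp add: algebra_simps)
          also have "\<dots> = (- (be * eval_form d f2 q)) * DW d f2 q w - eval_form d f2 q * (- (be * DW d f2 q w))"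
            unfolding h1 h2 ..
          finally show ?thesis by simp
        qed
        then have al0: "al = 0" using qw by simp
        have "be * Wr d f1 f2 q w = 0"
        proof -
          have "be * Wr d f1 f2 q w = eval_form d f1 q * (be * DW d f2 q w) - (be * eval_form d f2 q) * DW d f1 q w"
            unfolding Wr_def by (simp add: algebra_simps)
          also have "\<dots> = eval_form d f1 q * (- (al * DW d f1 q w)) - (- (al * eval_form d f1 q)) * DW d f1 q w"
            unfolding h3 h4 ..
          finally show ?thesis by simp
        qed
        then have be0: "be = 0" using qw by simp
        show "F = (\<lambda>_. 0)" using FF al0 be0 by simp
      qed
      show ?thesis
        apply (rule exI[of _ x1], rule exI[of _ ?Rs], rule exI[of _ ?Cs])
        using False False2 x02 len' dist' sub' lc det' Rs by (auto simp: x1_def all_rows_Suc)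
    qed
  qed
qed



section \<open>Dimension computation\<close>

interpretation fvs: vector_space "\<lambda>(c::'k::field) (F::nat \<times> nat \<times> nat \<Rightarrow> 'k) mn. c * F mn"
  by unfold_locales (auto simp: fun_eq_iff algebra_simps)

lemma sum_fun_apply: "(\<Sum>b\<in>A. g b) mn = (\<Sum>b\<in>A. g b mn)"
  by (induction A rule: infinite_finite_induct) auto

lemma H_eq:
  fixes x :: "nat \<Rightarrow> 'k::field"
  assumes x2: "x 2 \<noteq> 0"
  shows "H0_IX d m (par_p x) s (par_q x) (par_w x) = {F. F \<in> forms d \<and> (\<forall>r\<in>set (all_rows m s). ell d r x F = 0)}"
  using H_rows rows_H[where x=x, OF _ x2] unfolding H0_IX_def by blast

lemma dim_case1:
  fixes x :: "nat \<Rightarrow> 'k::field"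
  assumes x2: "x 2 \<noteq> 0" and len: "length Cs = length Rs" and dist: "distinct Cs" and sub: "set Cs \<subseteq> monoms d"
    and Rs: "Rs = all_rows m s" and det: "det (Mx Rs Cs x) \<noteq> 0"
  shows "fvs.dim (H0_IX d m (par_p x) s (par_q x) (par_w x)) = card (monoms d) - length Rs"
proof -
  let ?H = "H0_IX d m (par_p x) s (par_q x) (par_w x)"
  define A where "A = monoms d - set Cs"
  have "\<forall>b\<in>A. \<exists>f. f b = 1 \<and> (\<forall>mn. mn \<notin> set Cs \<and> mn \<noteq> b \<longrightarrow> f mn = 0) \<and> (\<forall>r\<in>set Rs. ell d r x f = 0)"
    using LA1[OF len dist sub det] unfolding A_def by blast
  then obtain fb where fb: "\<And>b. b \<in> A \<Longrightarrow> fb b b = 1"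
    "\<And>b mn. b \<in> A \<Longrightarrow> mn \<notin> set Cs \<Longrightarrow> mn \<noteq> b \<Longrightarrow> fb b mn = 0"
    "\<And>b r. b \<in> A \<Longrightarrow> r \<in> set Rs \<Longrightarrow> ell d r x (fb b) = 0"
    by metis
  have HE: "?H = {F. F \<in> forms d \<and> (\<forall>r\<in>set Rs. ell d r x F = 0)}" using H_eq[where x=x, OF x2] Rs by simp
  have fbF: "fb b \<in> forms d" if "b \<in> A" for b
    unfolding forms_iff using fb(2)[OF that] that sub by (auto simp: A_def)
  have fbH: "fb b \<in> ?H" if "b \<in> A" for b using fbF[OF that] fb(3)[OF that] HE by auto
  have fb_other: "fb b' b = 0" if "b \<in> A" "b' \<in> A" "b' \<noteq> b" for b b'
    using fb(2)[of b' b] that by (auto simp: A_def)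
  have inj: "inj_on fb A"
  proof (rule inj_onI)
    fix b b' assume "b \<in> A" "b' \<in> A" "fb b = fb b'"
    then show "b = b'" using fb(1) fb_other by (metis zero_neq_one)
  qed
  define B where "B = fb ` A"
  have finA: "finite A" by (simp add: A_def)
  have subsp: "fvs.subspace ?H"
    unfolding fvs.subspace_def HE
  proof (intro conjI ballI allI)
    show "0 \<in> {F. F \<in> forms d \<and> (\<forall>r\<in>set Rs. ell d r x F = 0)}"
      by (auto simp: forms_def ell_def)
    fix F G assume F: "F \<in> {F. F \<in> forms d \<and> (\<forall>r\<in>set Rs. ell d r x F = 0)}"
      and G: "G \<in> {F. F \<in> forms d \<and> (\<forall>r\<in>set Rs. ell d r x F = 0)}"
    have "F + G = (\<lambda>mn. F mn + G mn)" by (simp add: fun_eq_iff)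
    then show "F + G \<in> {F. F \<in> forms d \<and> (\<forall>r\<in>set Rs. ell d r x F = 0)}"
      using F G by (auto simp: forms_iff ell_add)
  next
    fix c :: 'k and F assume F: "F \<in> {F. F \<in> forms d \<and> (\<forall>r\<in>set Rs. ell d r x F = 0)}"
    then show "(\<lambda>mn. c * F mn) \<in> {F. F \<in> forms d \<and> (\<forall>r\<in>set Rs. ell d r x F = 0)}"
      by (auto simp: forms_iff ell_scale)
  qed
  have span: "?H = fvs.span B"
  proof
    show "fvs.span B \<subseteq> ?H" by (rule fvs.span_minimal[OF _ subsp]) (use fbH in \<open>auto simp: B_def\<close>)
    show "?H \<subseteq> fvs.span B"
    proof
      fix F assume FH: "F \<in> ?H"
      then have F: "F \<in> forms d" "\<And>r. r \<in> set Rs \<Longrightarrow> ell d r x F = 0" using HE by auto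
      define S where "S = (\<Sum>b\<in>A. (\<lambda>mn. F b * fb b mn))"
      have Sapp: "S mn = (\<Sum>b\<in>A. F b * fb b mn)" for mn unfolding S_def sum_fun_apply ..
      define D where "D = (\<lambda>mn. F mn - S mn)"
      have "D = (\<lambda>_. 0)"
      proof (rule LA2[OF len dist sub det])
        fix mn assume mn: "mn \<notin> set Cs"
        show "D mn = 0"
        proof (cases "mn \<in> A")
          case True
          have "S mn = F mn * fb mn mn"
            unfolding Sapp by (subst sum.remove[OF finA True]) (auto intro!: sum.neutral simp: fb_other True)
          then show ?thesis using fb(1)[OF True] by (simp add: D_def)
        next
          case False
          then have "mn \<notin> monoms d" using mn by (auto simp: A_def)
          then have "mn \<noteq> b" if "b \<in> A" for b using that by (auto simp: A_def)
          then have "fb b mn = 0" if "b \<in> A" for b using fb(2)[OF that mn] that by blast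
          then have "S mn = 0" unfolding Sapp by (simp add: sum.neutral)
          moreover have "F mn = 0" using forms_zero[OF F(1) \<open>mn \<notin> monoms d\<close>] .
          ultimately show ?thesis by (simp add: D_def)
        qed
      next
        fix r assume r: "r \<in> set Rs"
        have "ell d r x D = ell d r x F - ell d r x S" unfolding D_def by (rule ell_diff)
        also have "ell d r x S = (\<Sum>b\<in>A. F b * ell d r x (fb b))"
          unfolding S_def sum_fun_apply[abs_def] by (simp add: ell_sum[OF finA] ell_scale)
        finally show "ell d r x D = 0" using F(2)[OF r] fb(3)[OF _ r] by simp
      qed
      then have "F = S" unfolding D_def by (auto simp: fun_eq_iff)
      moreover have "S \<in> fvs.span B" unfolding S_def
        by (intro fvs.span_sum fvs.span_scale fvs.span_base) (auto simp: B_def)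
      ultimately show "F \<in> fvs.span B" by simp
    qed
  qed
  have indep: "fvs.independent B"
  proof (rule fvs.independent_if_scalars_zero)
    show "finite B" using finA by (simp add: B_def)
    fix u :: "(nat \<times> nat \<times> nat \<Rightarrow> 'k) \<Rightarrow> 'k" and v
    assume z: "(\<Sum>v\<in>B. (\<lambda>mn. u v * v mn)) = 0" and v: "v \<in> B"
    then obtain b where b: "b \<in> A" "v = fb b" by (auto simp: B_def)
    have "0 = (\<Sum>v\<in>B. (\<lambda>mn. u v * v mn)) b" using z by simp
    also have "\<dots> = (\<Sum>b'\<in>A. u (fb b') * fb b' b)"
      unfolding sum_fun_apply B_def by (simp add: sum.reindex[OF inj])
    also have "\<dots> = u (fb b) * fb b b"
      by (subst sum.remove[OF finA b(1)]) (auto intro!: sum.neutral simp: fb_other b(1))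
    finally show "u v = 0" using fb(1)[OF b(1)] b by simp
  qed
  have "fvs.dim ?H = card B" unfolding span by (rule fvs.dim_span_eq_card_independent[OF indep])
  also have "\<dots> = card A" unfolding B_def by (rule card_image[OF inj])
  also have "\<dots> = card (monoms d) - length Rs"
    unfolding A_def using sub dist len by (simp add: card_Diff_subset distinct_card)
  finally show ?thesis .
qed

lemma dim_case2:
  fixes x :: "nat \<Rightarrow> 'k::field"
  assumes len: "length Cs = length Rs" and dist: "distinct Cs" and sub: "set Cs \<subseteq> monoms d"
    and subR: "set Rs \<subseteq> set (all_rows m s)" and lenN: "length Rs = card (monoms d)" and det: "det (Mx Rs Cs x) \<noteq> 0"
  shows "fvs.dim (H0_IX d m (par_p x) s (par_q x) (par_w x)) = 0"
proof -
  let ?H = "H0_IX d m (par_p x) s (par_q x) (par_w x)"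
  have eqC: "set Cs = monoms d"
    by (rule card_subset_eq[OF finite_monoms sub]) (use dist len lenN in \<open>auto simp: distinct_card\<close>)
  have "?H \<subseteq> {0}"
  proof
    fix F assume FH: "F \<in> ?H"
    have "F = (\<lambda>_. 0)"
    proof (rule LA2[OF len dist sub det])
      show "F mn = 0" if "mn \<notin> set Cs" for mn
      proof -
        have "F \<in> forms d" using FH unfolding H0_IX_def by blast
        then show ?thesis using forms_zero that eqC by blast
      qed
      show "ell d r x F = 0" if "r \<in> set Rs" for r
        using H_rows[OF FH] subR that by auto
    qed
    then show "F \<in> {0}" by (simp add: zero_fun_def)
  qed
  then have "?H \<subseteq> fvs.span {}" by (simp add: fvs.span_empty)
  then have "fvs.dim ?H \<le> card ({} :: (nat \<times> nat \<times> nat \<Rightarrow> 'k) set)" by (rule fvs.dim_le_card) simp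
  then show ?thesis by simp
qed



interpretation mev: comm_ring_hom "\<lambda>G. mpoly_eval G x" for x
  by unfold_locales (auto simp: mpoly_eval_add mpoly_eval_mult)

definition Xv :: "nat \<Rightarrow> (nat \<Rightarrow>\<^sub>0 nat) \<Rightarrow>\<^sub>0 'k::field" where
  "Xv i = Poly_Mapping.single (Poly_Mapping.single i 1) 1"

definition cst :: "'k::field \<Rightarrow> (nat \<Rightarrow>\<^sub>0 nat) \<Rightarrow>\<^sub>0 'k" where
  "cst c = Poly_Mapping.single 0 c"

lemma eval_Xv[simp]: "mpoly_eval (Xv i) x = x i"
  by (simp add: Xv_def mono_eval_def)

lemma eval_cst[simp]: "mpoly_eval (cst c) x = c"
  by (simp add: cst_def)

lemma eval_power: "mpoly_eval (p ^ n) x = mpoly_eval p x ^ n"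
  by (induction n) (auto simp: mpoly_eval_mult)

definition pdp :: "nat \<times> nat \<times> nat \<Rightarrow> nat \<Rightarrow> nat \<Rightarrow> nat \<Rightarrow> nat \<times> nat \<times> nat \<Rightarrow> (nat \<Rightarrow>\<^sub>0 nat) \<Rightarrow>\<^sub>0 'k::field" where
  "pdp ijl v0 v1 v2 mn = (case ijl of (i,j,l) \<Rightarrow> case mn of (a,b,c) \<Rightarrow>
     cst (ffact a i * ffact b j * ffact c l) * Xv v0 ^ (a - i) * Xv v1 ^ (b - j) * Xv v2 ^ (c - l))"

lemma eval_pdp: "mpoly_eval (pdp ijl v0 v1 v2 mn) x = pd_coef ijl (x v0, x v1, x v2) mn"
  unfolding pdp_def pd_coef_def
  by (cases ijl; cases mn) (simp add: mpoly_eval_mult eval_power)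

fun kp :: "row \<Rightarrow> nat \<times> nat \<times> nat \<Rightarrow> (nat \<Rightarrow>\<^sub>0 nat) \<Rightarrow>\<^sub>0 'k::field" where
  "kp (RP i j) mn = pdp (i,j,0) 0 1 2 mn"
| "kp (RQ i) mn = pdp (0,0,0) (3+6*i) (3+6*i+1) (3+6*i+2) mn"
| "kp (RW i) mn = Xv (3+6*i+3) * pdp (1,0,0) (3+6*i) (3+6*i+1) (3+6*i+2) mn
     + Xv (3+6*i+4) * pdp (0,1,0) (3+6*i) (3+6*i+1) (3+6*i+2) mn
     + Xv (3+6*i+5) * pdp (0,0,1) (3+6*i) (3+6*i+1) (3+6*i+2) mn"
| "kp RZ mn = 0"

lemma eval_kp: "mpoly_eval (kp r mn) x = kappa r x mn"
  by (cases r) (simp_all add: eval_pdp mpoly_eval_add mpoly_eval_mult par_p_def par_q_def par_w_def)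

definition Mp :: "row list \<Rightarrow> (nat \<times> nat \<times> nat) list \<Rightarrow> ((nat \<Rightarrow>\<^sub>0 nat) \<Rightarrow>\<^sub>0 'k::field) mat" where
  "Mp Rs Cs = mat (length Rs) (length Cs) (\<lambda>(a,k). kp (Rs!a) (Cs!k))"

lemma eval_det_Mp: "mpoly_eval (det (Mp Rs Cs)) x = det (Mx Rs Cs x)"
proof -
  have "map_mat (\<lambda>G. mpoly_eval G x) (Mp Rs Cs) = Mx Rs Cs x"
    unfolding Mp_def Mx_def by (intro eq_matI) (auto simp: eval_kp)
  then show ?thesis using mev.hom_det[of x "Mp Rs Cs"] by simp
qed

lemma iv_add: "mpoly_in_vars f V \<Longrightarrow> mpoly_in_vars g V \<Longrightarrow> mpoly_in_vars (f + g) V"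
  unfolding mpoly_in_vars_def
proof
  fix mn assume f: "\<forall>mn\<in>Poly_Mapping.keys f. Poly_Mapping.keys mn \<subseteq> V"
    and g: "\<forall>mn\<in>Poly_Mapping.keys g. Poly_Mapping.keys mn \<subseteq> V" and mn: "mn \<in> Poly_Mapping.keys (f + g)"
  have "mn \<in> Poly_Mapping.keys f \<union> Poly_Mapping.keys g" using keys_add[of f g] mn by (rule subsetD)
  then show "Poly_Mapping.keys mn \<subseteq> V" using f g by blast
qed

lemma iv_mult: "mpoly_in_vars f V \<Longrightarrow> mpoly_in_vars g V \<Longrightarrow> mpoly_in_vars (f * g) V"
  unfolding mpoly_in_vars_def
proof
  fix mn assume f: "\<forall>mn\<in>Poly_Mapping.keys f. Poly_Mapping.keys mn \<subseteq> V"
    and g: "\<forall>mn\<in>Poly_Mapping.keys g. Poly_Mapping.keys mn \<subseteq> V" and mn: "mn \<in> Poly_Mapping.keys (f * g)"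
  have "mn \<in> {a + b | a b. a \<in> Poly_Mapping.keys f \<and> b \<in> Poly_Mapping.keys g}"
    using keys_mult[of f g] mn by (rule subsetD)
  then obtain a b where ab: "mn = a + b" "a \<in> Poly_Mapping.keys f" "b \<in> Poly_Mapping.keys g"
    by blast
  have "Poly_Mapping.keys mn \<subseteq> Poly_Mapping.keys a \<union> Poly_Mapping.keys b" unfolding ab(1) by (rule keys_add)
  then show "Poly_Mapping.keys mn \<subseteq> V" using f g ab(2,3) by blast
qed

lemma iv_single: "Poly_Mapping.keys k \<subseteq> V \<Longrightarrow> mpoly_in_vars (Poly_Mapping.single k c) V"
  unfolding mpoly_in_vars_def by simp

lemma iv_cst: "mpoly_in_vars (cst c) V" unfolding cst_def by (rule iv_single) simp

lemma iv_Xv: "i \<in> V \<Longrightarrow> mpoly_in_vars (Xv i :: (nat \<Rightarrow>\<^sub>0 nat) \<Rightarrow>\<^sub>0 'k::field) V"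
  unfolding Xv_def by (rule iv_single) simp

lemma iv_0: "mpoly_in_vars 0 V" by (simp add: mpoly_in_vars_def)
lemma iv_1: "mpoly_in_vars 1 V" by (simp add: mpoly_in_vars_def)
lemma iv_uminus: "mpoly_in_vars f V \<Longrightarrow> mpoly_in_vars (- f) V" by (simp add: mpoly_in_vars_def)

lemma iv_power: "mpoly_in_vars f V \<Longrightarrow> mpoly_in_vars (f ^ n) V"
  by (induction n) (auto intro: iv_mult iv_1)

lemma iv_sum: "(\<And>i. i \<in> A \<Longrightarrow> mpoly_in_vars (f i) V) \<Longrightarrow> mpoly_in_vars (\<Sum>i\<in>A. f i) V"
  by (induction A rule: infinite_finite_induct) (auto intro: iv_add iv_0)

lemma iv_prod: "(\<And>i. i \<in> A \<Longrightarrow> mpoly_in_vars (f i) V) \<Longrightarrow> mpoly_in_vars (\<Prod>i\<in>A. f i) V"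
  by (induction A rule: infinite_finite_induct) (auto intro: iv_mult iv_1)

lemma iv_of_int: "mpoly_in_vars (of_int k) V"
  by (simp add: single_of_int[symmetric] iv_single del: single_of_int)

lemma iv_det:
  assumes "\<And>i j. i < dim_row A \<Longrightarrow> j < dim_col A \<Longrightarrow> mpoly_in_vars (A $$ (i,j)) V"
  shows "mpoly_in_vars (det A) V"
proof (cases "dim_row A = dim_col A")
  case True
  have "mpoly_in_vars (\<Sum>p\<in>{p. p permutes {0..<dim_row A}}. signof p * (\<Prod>i = 0..<dim_row A. A $$ (i, p i))) V"
  proof (rule iv_sum)
    fix p assume "p \<in> {p. p permutes {0..<dim_row A}}"
    then have p: "p permutes {0..<dim_row A}" by simp
    show "mpoly_in_vars (signof p * (\<Prod>i = 0..<dim_row A. A $$ (i, p i))) V"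
    proof (rule iv_mult[OF iv_of_int iv_prod])
      fix i assume "i \<in> {0..<dim_row A}"
      then have "i < dim_row A" "p i < dim_col A" using p True by (auto simp: permutes_in_image)
      then show "mpoly_in_vars (A $$ (i, p i)) V" by (rule assms)
    qed
  qed
  then show ?thesis unfolding det_def using True by simp
qed (simp add: det_def iv_0)

lemma iv_pdp: "v0 \<in> V \<Longrightarrow> v1 \<in> V \<Longrightarrow> v2 \<in> V \<Longrightarrow> mpoly_in_vars (pdp ijl v0 v1 v2 mn :: (nat \<Rightarrow>\<^sub>0 nat) \<Rightarrow>\<^sub>0 'k::field) V"
  unfolding pdp_def by (cases ijl; cases mn) (auto intro!: iv_mult iv_power iv_cst iv_Xv)

lemma iv_kp: "r \<in> set (all_rows m s) \<Longrightarrow> mpoly_in_vars (kp r mn :: (nat \<Rightarrow>\<^sub>0 nat) \<Rightarrow>\<^sub>0 'k::field) {..<3 + 6*s}"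
  unfolding set_all_rows by (auto intro!: iv_add iv_mult iv_pdp iv_Xv)



theorem lemma2p6:
  fixes s m d :: nat
  assumes "alg_closed TYPE('k::field_char_0)"
    and "d + 1 \<ge> m"
  shows "\<exists>G :: (nat \<Rightarrow>\<^sub>0 nat) \<Rightarrow>\<^sub>0 'k. G \<noteq> 0 \<and> mpoly_in_vars G {..<3 + 6*s} \<and>
    (\<forall>x :: nat \<Rightarrow> 'k. mpoly_eval G x \<noteq> 0 \<and> par_p x \<noteq> (0,0,0) \<and>
        (\<forall>i<s. indep2 (par_q x i) (par_w x i)) \<longrightarrow>
      int (h0_IX d m (par_p x) s (par_q x) (par_w x))
        = max (int ((d+2) choose 2) - int ((m+1) choose 2) - 2 * int s) 0)"
proof -
  have md: "m \<le> d + 1" using assms(2) by simp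
  let ?N = "card (monoms d)"
  let ?c = "((m+1) choose 2) + 2*s"
  obtain x0 :: "nat \<Rightarrow> 'k" and Rs Cs where
    x02: "x0 2 \<noteq> 0" and len: "length Cs = length Rs" and dist: "distinct Cs" and sub: "set Cs \<subseteq> monoms d"
    and lenR: "length Rs = min ?c ?N" and subR: "set Rs \<subseteq> set (all_rows m s)"
    and allR: "?c \<le> ?N \<longrightarrow> Rs = all_rows m s" and det0: "det (Mx Rs Cs x0) \<noteq> 0"
    using exist_good[OF md, of s] by blast
  define G :: "(nat \<Rightarrow>\<^sub>0 nat) \<Rightarrow>\<^sub>0 'k" where "G = Xv 2 * det (Mp Rs Cs)"
  have evalG: "mpoly_eval G x = x 2 * det (Mx Rs Cs x)" for x
    unfolding G_def by (simp add: mpoly_eval_mult eval_det_Mp)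
  have Gnz: "G \<noteq> 0"
  proof
    assume "G = 0"
    then have "mpoly_eval G x0 = 0" by simp
    with evalG[of x0] x02 det0 show False by simp
  qed
  have Gvars: "mpoly_in_vars G {..<3 + 6*s}"
    unfolding G_def
  proof (rule iv_mult[OF iv_Xv iv_det])
    show "2 \<in> {..<3 + 6*s}" by simp
    fix i j assume "i < dim_row (Mp Rs Cs)" "j < dim_col (Mp Rs Cs)"
    then have ij: "i < length Rs" "j < length Cs" by (auto simp: Mp_def)
    then have "Rs ! i \<in> set (all_rows m s)" using subR by auto
    then show "mpoly_in_vars (Mp Rs Cs $$ (i, j)) {..<3 + 6*s}"
      using ij by (simp add: Mp_def iv_kp)
  qed
  have main: "int (h0_IX d m (par_p x) s (par_q x) (par_w x))
        = max (int ((d+2) choose 2) - int ((m+1) choose 2) - 2 * int s) 0"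
    if nz: "mpoly_eval G x \<noteq> 0" for x :: "nat \<Rightarrow> 'k"
  proof -
    have x2: "x 2 \<noteq> 0" and det: "det (Mx Rs Cs x) \<noteq> 0" using nz evalG[of x] by auto
    have h0: "h0_IX d m (par_p x) s (par_q x) (par_w x) = fvs.dim (H0_IX d m (par_p x) s (par_q x) (par_w x))"
      by (simp add: h0_IX_def)
    have N: "?N = (d+2) choose 2" by (rule card_monoms)
    show ?thesis
    proof (cases "?c \<le> ?N")
      case True
      then have Rs: "Rs = all_rows m s" using allR by simp
      have "h0_IX d m (par_p x) s (par_q x) (par_w x) = ?N - length Rs"
        unfolding h0 by (rule dim_case1[OF x2 len dist sub Rs det])
      then show ?thesis using True Rs N by (simp add: length_all_rows of_nat_diff)
    next
      case False
      then have lN: "length Rs = ?N" using lenR by simp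
      have "h0_IX d m (par_p x) s (par_q x) (par_w x) = 0"
        unfolding h0 by (rule dim_case2[OF len dist sub subR lN det])
      then show ?thesis using False N by simp
    qed
  qed
  show ?thesis using Gnz Gvars main by blast
qed


end
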